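(* Let $X$ be one of the Killing vector fields $\partial_x$, $\partial_\theta$, $x\partial_x+y\partial_y$, $\frac12(x^2-y^2)\partial_x+xy\partial_y$ of $\mathrm{SL}(2,\mathbb R)$. Then every $\mathcal A$-invariant $X$-translator is a surface of type $\Sigma_{x_0}$ or of type $\Sigma_{\theta_0}$ (depending on $X$).
   Context: $\mathrm{SL}(2,\mathbb R)$ is given global coordinates $(x,y,\theta)\in\mathbb R\times(0,\infty)\times\mathbb R$ via $(x,y,\theta)\mapsto \begin{pmatrix}1&x\\0&1\end{pmatrix}\begin{pmatrix}\sqrt y&0\\0&1/\sqrt y\end{pmatrix}\begin{pmatrix}\cos\theta&\sin\theta\\-\sin\theta&\cos\theta\end{pmatrix}$, with the metric $\langle\,,\rangle=\frac{dx^2+dy^2}{4y^2}+\left(d\theta+\frac{dx}{2y}\right)^2$. Orthonormal frame: $e_1=2y\partial_x-\partial_\theta$, $e_2=2y\partial_y$, $e_3=\partial_\theta$. A surface with unit normal $N$ and mean curvature $H$ (average of principal curvatures w.r.t. $N$) is an $X$-translator if $H=\langle N,X\rangle$. $\mathcal A$-invariant surfaces are those parametrized as $(s,t)\mapsto(x(s),t,\theta(s))$, $t>0$, with regular generating curve $(x(s),\theta(s))$; for them $N=\frac1\Phi(-(x'+2t\theta')e_1+x'e_3)$ and $H=\frac{2t^2}{\Phi^3}(x'\theta''-\theta'x'')$, $\Phi=\sqrt{(x'+2t\theta')^2+x'^2}$. For constants $x_0,\theta_0$: $\Sigma_{x_0}=\{x=x_0\}$, $\Sigma_{\theta_0}=\{\theta=\theta_0\}$.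 *)

theory Defs
  imports "HOL-Analysis.Analysis"
begin

text \<open>Points of SL(2,R) in the global coordinates (x, y, theta), y > 0, and tangent
vectors in coordinate components (a, b, c) meaning a d/dx + b d/dy + c d/dtheta.\<close>

type_synonym vec3 = "real \<times> real \<times> real"

definition sl2_metric :: "vec3 \<Rightarrow> vec3 \<Rightarrow> vec3 \<Rightarrow> real" where
  "sl2_metric p u v =
     (case p of (x, y, th) \<Rightarrow> case u of (u1, u2, u3) \<Rightarrow> case v of (v1, v2, v3) \<Rightarrow>
        (u1 * v1 + u2 * v2) / (4 * y^2) + (u3 + u1 / (2 * y)) * (v3 + v1 / (2 * y)))"

definition frame_e1 :: "vec3 \<Rightarrow> vec3" where
  "frame_e1 p = (case p of (x, y, th) \<Rightarrow> (2 * y, 0, -1))"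
definition frame_e2 :: "vec3 \<Rightarrow> vec3" where
  "frame_e2 p = (case p of (x, y, th) \<Rightarrow> (0, 2 * y, 0))"
definition frame_e3 :: "vec3 \<Rightarrow> vec3" where
  "frame_e3 p = (0, 0, 1)"

definition killing_dx :: "vec3 \<Rightarrow> vec3" where
  "killing_dx p = (1, 0, 0)"
definition killing_dtheta :: "vec3 \<Rightarrow> vec3" where
  "killing_dtheta p = (0, 0, 1)"
definition killing_dil :: "vec3 \<Rightarrow> vec3" where
  "killing_dil p = (case p of (x, y, th) \<Rightarrow> (x, y, 0))"
definition killing_par :: "vec3 \<Rightarrow> vec3" where
  "killing_par p = (case p of (x, y, th) \<Rightarrow> ((x^2 - y^2) / 2, x * y, 0))"

text \<open>Data of an A-invariant surface (s,t) -> (x(s), t, theta(s)), t > 0, in terms of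
the first derivatives x1 = x', th1 = theta' and second derivatives x2, th2 at s.\<close>
definition ainv_Phi :: "real \<Rightarrow> real \<Rightarrow> real \<Rightarrow> real" where
  "ainv_Phi x1 th1 t = sqrt ((x1 + 2 * t * th1)^2 + x1^2)"

definition ainv_normal :: "real \<Rightarrow> real \<Rightarrow> real \<Rightarrow> vec3 \<Rightarrow> vec3" where
  "ainv_normal x1 th1 t p =
     (1 / ainv_Phi x1 th1 t) *\<^sub>R (( - (x1 + 2 * t * th1)) *\<^sub>R frame_e1 p + x1 *\<^sub>R frame_e3 p)"

definition ainv_H :: "real \<Rightarrow> real \<Rightarrow> real \<Rightarrow> real \<Rightarrow> real \<Rightarrow> real" where
  "ainv_H x1 th1 x2 th2 t = 2 * t^2 / (ainv_Phi x1 th1 t)^3 * (x1 * th2 - th1 * x2)"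

definition ainv_surface :: "real set \<Rightarrow> (real \<Rightarrow> real) \<Rightarrow> (real \<Rightarrow> real) \<Rightarrow> vec3 set" where
  "ainv_surface I x th = {(x s, t, th s) | s t. s \<in> I \<and> t > 0}"

definition ainv_translator ::
  "(vec3 \<Rightarrow> vec3) \<Rightarrow> real set \<Rightarrow> (real \<Rightarrow> real) \<Rightarrow> (real \<Rightarrow> real) \<Rightarrow>
   (real \<Rightarrow> real) \<Rightarrow> (real \<Rightarrow> real) \<Rightarrow> (real \<Rightarrow> real) \<Rightarrow> (real \<Rightarrow> real) \<Rightarrow> bool" where
  "ainv_translator X I x th x1 th1 x2 th2 \<longleftrightarrow>
     (\<forall>s\<in>I. \<forall>t>0. let p = (x s, t, th s) in
        ainv_H (x1 s) (th1 s) (x2 s) (th2 s) t =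
          sl2_metric p (ainv_normal (x1 s) (th1 s) t p) (X p))"

definition Sigma_x :: "real \<Rightarrow> vec3 set" where
  "Sigma_x x0 = {(x0, y, th) | y th. y > 0}"
definition Sigma_theta :: "real \<Rightarrow> vec3 set" where
  "Sigma_theta th0 = {(x, y, th0) | x y. y > 0}"

end

theory Submission
  imports Defs
begin
lemma key:
  assumes reg: "x1 \<noteq> 0 \<or> th1 \<noteq> 0" and t: "t > 0"
    and h: "ainv_H x1 th1 x2 th2 t = sl2_metric (a,t,b) (ainv_normal x1 th1 t (a,t,b)) (v1,v2,v3)"
  shows "2*t^2*(x1*th2 - th1*x2) = (x1 * v3 - th1 * v1) * ((x1+2*t*th1)^2 + x1^2)"
proof -
  define P where "P = (x1+2*t*th1)^2 + x1^2"
  have P: "P > 0"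
  proof (cases "x1 = 0")
    case True
    then show ?thesis using reg t unfolding P_def by simp
  next
    case False
    then show ?thesis unfolding P_def by (simp add: add_nonneg_pos)
  qed
  define F where "F = sqrt P"
  have F: "F > 0" "F^2 = P" using P by (auto simp: F_def)
  have "ainv_H x1 th1 x2 th2 t = 2*t^2/F^3 * (x1*th2 - th1*x2)"
    by (simp add: ainv_H_def ainv_Phi_def F_def P_def)
  moreover have "sl2_metric (a,t,b) (ainv_normal x1 th1 t (a,t,b)) (v1,v2,v3) = (x1 * v3 - th1 * v1)/F"
    using t F unfolding sl2_metric_def ainv_normal_def frame_e1_def frame_e3_def ainv_Phi_def F_def[symmetric] P_def[symmetric]
    by (simp add: field_simps power2_eq_square)
  ultimately have E: "2*t^2/F^3 * (x1*th2 - th1*x2) = (x1 * v3 - th1 * v1)/F" using h by simp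
  have "2*t^2 * (x1*th2 - th1*x2) = (2*t^2/F^3 * (x1*th2 - th1*x2)) * F^3" using F by simp
  also have "\<dots> = ((x1 * v3 - th1 * v1)/F) * F^3" using E by simp
  also have "\<dots> = (x1 * v3 - th1 * v1) * F^2" using F by (simp add: power3_eq_cube power2_eq_square)
  finally show ?thesis using F P_def by simp
qed

lemma poly2_const:
  fixes p q r :: real
  assumes h: "\<And>t. t > 0 \<Longrightarrow> p + q*t + r*t^2 = 0"
  shows "p = 0"
proof -
  have e1: "p + q + r = 0" using h[of 1] by simp
  have e2: "p + 2*q + 4*r = 0" using h[of 2] by simp
  have e3: "p + 3*q + 9*r = 0" using h[of 3] by simp
  have "p = 3*(p + q + r) - 3*(p + 2*q + 4*r) + (p + 3*q + 9*r)" by algebra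
  also have "\<dots> = 0" unfolding e1 e2 e3 by simp
  finally show ?thesis .
qed

lemma poly4_top:
  fixes p q r u w :: real
  assumes h: "\<And>t. t > 0 \<Longrightarrow> p + q*t + r*t^2 + u*t^3 + w*t^4 = 0"
  shows "w = 0"
proof -
  have e1: "p + q + r + u + w = 0" using h[of 1] by simp
  have e2: "p + 2*q + 4*r + 8*u + 16*w = 0" using h[of 2] by simp
  have e3: "p + 3*q + 9*r + 27*u + 81*w = 0" using h[of 3] by simp
  have e4: "p + 4*q + 16*r + 64*u + 256*w = 0" using h[of 4] by simp
  have e5: "p + 5*q + 25*r + 125*u + 625*w = 0" using h[of 5] by simp
  have "24*w = (p + q + r + u + w) - 4*(p + 2*q + 4*r + 8*u + 16*w)
    + 6*(p + 3*q + 9*r + 27*u + 81*w) - 4*(p + 4*q + 16*r + 64*u + 256*w)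
    + (p + 5*q + 25*r + 125*u + 625*w)" by algebra
  also have "\<dots> = 0" unfolding e1 e2 e3 e4 e5 by simp
  finally show ?thesis by simp
qed

lemma const_lemma:
  fixes f f' :: "real \<Rightarrow> real"
  assumes "open I" "connected I" "\<forall>s\<in>I. (f has_real_derivative f' s) (at s)" "\<forall>s\<in>I. f' s = 0"
  shows "\<exists>c. \<forall>s\<in>I. f s = c"
proof -
  have "continuous_on I f"
    using assms(3) by (intro continuous_at_imp_continuous_on ballI DERIV_isCont) auto
  moreover have "\<forall>s\<in>I - {}. (f has_real_derivative 0) (at s)" using assms(3,4) by auto
  ultimately obtain c where "\<And>s. s \<in> I \<Longrightarrow> f s = c"
    by (rule DERIV_zero_connected_constant[OF assms(2,1) finite.emptyI]) auto
  thus ?thesis by blast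
qed

lemma open_nz:
  fixes f :: "real \<Rightarrow> real"
  assumes "open I" "continuous_on I f"
  shows "open {s\<in>I. f s \<noteq> 0}"
proof -
  have "open (I \<inter> f -` (- {0}))"
    by (rule continuous_open_preimage[OF assms(2,1)]) (simp add: open_Compl)
  moreover have "I \<inter> f -` (- {0}) = {s\<in>I. f s \<noteq> 0}" by auto
  ultimately show ?thesis by simp
qed

lemma split_lemma:
  fixes f g :: "real \<Rightarrow> real"
  assumes "open I" "connected I" "continuous_on I f" "continuous_on I g"
    "\<forall>s\<in>I. f s * g s = 0" "\<forall>s\<in>I. f s \<noteq> 0 \<or> g s \<noteq> 0"
  shows "(\<forall>s\<in>I. f s = 0) \<or> (\<forall>s\<in>I. g s = 0)"
proof -
  have A: "open {s\<in>I. f s \<noteq> 0}" "open {s\<in>I. g s \<noteq> 0}"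
    using open_nz[OF assms(1,3)] open_nz[OF assms(1,4)] by auto
  have "{s\<in>I. f s \<noteq> 0} \<inter> I = {} \<or> {s\<in>I. g s \<noteq> 0} \<inter> I = {}"
    apply (rule connectedD[OF assms(2) A])
    using assms(5,6) by auto
  thus ?thesis by auto
qed

theorem mainTheorem7:
  fixes X :: "vec3 \<Rightarrow> vec3" and I :: "real set"
    and x th x1 th1 x2 th2 :: "real \<Rightarrow> real"
  assumes X: "X \<in> {killing_dx, killing_dtheta, killing_dil, killing_par}"
    and I: "open I" "connected I"
    and dx: "\<forall>s\<in>I. (x has_real_derivative x1 s) (at s)"
    and dx1: "\<forall>s\<in>I. (x1 has_real_derivative x2 s) (at s)"
    and dth: "\<forall>s\<in>I. (th has_real_derivative th1 s) (at s)"
    and dth1: "\<forall>s\<in>I. (th1 has_real_derivative th2 s) (at s)"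
    and regular: "\<forall>s\<in>I. x1 s \<noteq> 0 \<or> th1 s \<noteq> 0"
    and transl: "ainv_translator X I x th x1 th1 x2 th2"
  shows "(\<exists>x0. ainv_surface I x th \<subseteq> Sigma_x x0) \<or>
         (\<exists>th0. ainv_surface I x th \<subseteq> Sigma_theta th0)"
proof -
  have cx1: "continuous_on I x1"
    using dx1 by (intro continuous_at_imp_continuous_on ballI DERIV_isCont) auto
  have cth1: "continuous_on I th1"
    using dth1 by (intro continuous_at_imp_continuous_on ballI DERIV_isCont) auto
  have tr: "\<And>s t. s \<in> I \<Longrightarrow> t > 0 \<Longrightarrow> ainv_H (x1 s) (th1 s) (x2 s) (th2 s) t =
      sl2_metric (x s, t, th s) (ainv_normal (x1 s) (th1 s) t (x s, t, th s)) (X (x s, t, th s))"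
    using transl unfolding ainv_translator_def Let_def by blast
  have G: "(\<forall>s\<in>I. x1 s = 0) \<or> (\<forall>s\<in>I. th1 s = 0)"
  proof -
    consider "X = killing_dx" | "X = killing_dtheta" | "X = killing_dil" | "X = killing_par"
      using X by blast
    then show ?thesis
    proof cases
      case 1
      have "x1 s * th1 s = 0" if s: "s \<in> I" for s
      proof -
        have e: "2*t^2*(x1 s*th2 s - th1 s*x2 s) = (x1 s * 0 - th1 s * 1) * ((x1 s+2*t*th1 s)^2 + x1 s^2)"
          if "t > 0" for t :: real
          using key[OF bspec[OF regular s] that tr[OF s that, unfolded 1 killing_dx_def]] by simp
        have "-2*th1 s * x1 s ^2 = 0"
          by (rule poly2_const[where q="-4*th1 s^2*x1 s" and r="-4*th1 s^3 - 2*(x1 s*th2 s - th1 s*x2 s)"])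
             (drule e, algebra)
        thus ?thesis by auto
      qed
      then show ?thesis by (intro split_lemma[OF I cx1 cth1 _ regular]) blast
    next
      case 2
      have "x1 s = 0" if s: "s \<in> I" for s
      proof -
        have e: "2*t^2*(x1 s*th2 s - th1 s*x2 s) = (x1 s * 1 - th1 s * 0) * ((x1 s+2*t*th1 s)^2 + x1 s^2)"
          if "t > 0" for t :: real
          using key[OF bspec[OF regular s] that tr[OF s that, unfolded 2 killing_dtheta_def]] by simp
        have "2*x1 s ^3 = 0"
          by (rule poly2_const[where q="4*th1 s*x1 s^2" and r="4*th1 s^2*x1 s - 2*(x1 s*th2 s - th1 s*x2 s)"])
             (drule e, algebra)
        thus ?thesis by simp
      qed
      then show ?thesis by blast
    next
      case 3
      have z: "x s * (x1 s * th1 s) = 0" if s: "s \<in> I" for s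
      proof -
        have e: "2*t^2*(x1 s*th2 s - th1 s*x2 s) = (x1 s * 0 - th1 s * x s) * ((x1 s+2*t*th1 s)^2 + x1 s^2)"
          if "t > 0" for t :: real
          using key[OF bspec[OF regular s] that tr[OF s that, unfolded 3 killing_dil_def prod.case]] by simp
        have "-2*x s * th1 s * x1 s ^2 = 0"
          by (rule poly2_const[where q="-4*x s*th1 s^2*x1 s" and r="-4*x s*th1 s^3 - 2*(x1 s*th2 s - th1 s*x2 s)"])
             (drule e, algebra)
        thus ?thesis by (auto simp: power2_eq_square)
      qed
      have "x1 s * th1 s = 0" if s: "s \<in> I" for s
      proof (rule ccontr)
        assume ne: "x1 s * th1 s \<noteq> 0"
        define U where "U = {s\<in>I. x1 s * th1 s \<noteq> 0}"
        have "continuous_on I (\<lambda>s. x1 s * th1 s)" using cx1 cth1 by (intro continuous_intros)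
        hence "open U" unfolding U_def by (rule open_nz[OF I(1)])
        moreover have "s \<in> U" using s ne U_def by auto
        ultimately obtain d where d: "d > 0" "ball s d \<subseteq> U" by (meson openE)
        have "\<forall>y. \<bar>s - y\<bar> < d \<longrightarrow> x s = x y"
        proof (intro allI impI)
          fix y assume "\<bar>s - y\<bar> < d"
          hence "y \<in> U" using d by (auto simp: dist_real_def)
          hence "x y = 0" using z unfolding U_def by auto
          moreover have "x s = 0" using z s ne by auto
          ultimately show "x s = x y" by simp
        qed
        hence "x1 s = 0" using DERIV_local_const[OF bspec[OF dx s] d(1)] by blast
        thus False using ne by simp
      qed
      then show ?thesis by (intro split_lemma[OF I cx1 cth1 _ regular]) blast
    next
      case 4
      have "th1 s = 0" if s: "s \<in> I" for s
      proof -
        have e: "2*t^2*(x1 s*th2 s - th1 s*x2 s) = (x1 s * 0 - th1 s * ((x s^2 - t^2)/2)) * ((x1 s+2*t*th1 s)^2 + x1 s^2)"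
          if "t > 0" for t :: real
          using key[OF bspec[OF regular s] that tr[OF s that, unfolded 4 killing_par_def prod.case]] by simp
        have "2*th1 s ^3 = 0"
          by (rule poly4_top[where p="-th1 s*x s^2*x1 s^2" and q="-2*th1 s^2*x s^2*x1 s"
              and r="th1 s*x1 s^2 - 2*th1 s^3*x s^2 - 2*(x1 s*th2 s - th1 s*x2 s)" and u="2*th1 s^2*x1 s"])
             (drule e, algebra)
        thus ?thesis by simp
      qed
      then show ?thesis by blast
    qed
  qed
  show ?thesis
  proof (cases "\<forall>s\<in>I. x1 s = 0")
    case True
    then obtain c where c: "\<forall>s\<in>I. x s = c" using const_lemma[OF I dx] by blast
    have "ainv_surface I x th \<subseteq> Sigma_x c"
      unfolding ainv_surface_def Sigma_x_def using c by auto
    thus ?thesis by blast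
  next
    case False
    hence "\<forall>s\<in>I. th1 s = 0" using G by blast
    then obtain c where c: "\<forall>s\<in>I. th s = c" using const_lemma[OF I dth] by blast
    have "ainv_surface I x th \<subseteq> Sigma_theta c"
      unfolding ainv_surface_def Sigma_theta_def using c by auto
    thus ?thesis by blast
  qed
qed

end
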